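(* In the wireless backhaul network model below, consider the long-hop (beamforming) strategy: every hop is a single-stream eigen-beamformed MIMO link between two BSs, each hop must achieve received SNR at least a fixed target $P_0>0$ (independent of $n$), and every BS transmits at a rate bounded by a constant independent of $n$, which it shares among all connections it relays. Then for every $\epsilon>0$, with high probability, the worst-case per source–destination rate satisfies $$R(n)=O\!\left(\frac{\Psi(n)^{\frac{2}{\alpha}}}{n^{\frac12-\epsilon}}\right).$$
   Context: Model: base stations (BSs) are the points of a homogeneous Poisson point process of finite density $\lambda_{\rm b}>0$ restricted to the box $B_n=[0,\sqrt{n}]^2$; source–destination pairs are chosen uniformly at random so each BS is the source of one pair and destination of exactly one pair. Each BS has $\Psi(n)$ antennas ($\Psi$ non-decreasing) and transmit power at most $P$; noise power and bandwidth are $1$. For a link of BS separation $d>1$ with $\Psi(n)\times\Psi(n)$ channel matrix $\mathbf{H}$ with entries $h_{ik}=\sqrt{\min\{1,d^{-\alpha}\}}\exp(j\theta_{ik})$ ($\alpha>2$, arbitrary phases), single-stream eigen-beamforming achieves received SNR $P\lambda_{\max}(\mathbf{H}\mathbf{H}^\dagger)\le P d^{-\alpha}\Psi(n)^2$; thus the SNR target forces each hop length to satisfy $d\le d_{\rm c}=(P/P_0)^{1/\alpha}\Psi(n)^{2/\alpha}$. $R(n)$ is the worst-case rate over all source–destination pairs. $f(n)=O(g(n))$ w.h.p. means there exists a constant $K$ independent of $n$ with $\lim_{n\to\infty}\mathbb{P}(f(n)\le Kg(n))=1$. *)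

theory Defs
  imports "HOL-Probability.Probability"
begin

definition bs_box :: "nat \<Rightarrow> (real \<times> real) set" where
  "bs_box n = cbox (0, 0) (sqrt (real n), sqrt (real n))"

text \<open>A hop of BS separation d can meet the SNR target P0 only if the
  eigen-beamforming SNR upper bound P * min{1, d^-alpha} * Psi(n)^2 is at least P0
  (for d > 1 this is exactly d <= d_c).\<close>
definition hop_ok :: "real \<Rightarrow> real \<Rightarrow> real \<Rightarrow> (nat \<Rightarrow> nat) \<Rightarrow> nat \<Rightarrow> real \<Rightarrow> bool" where
  "hop_ok P P0 \<alpha> \<Psi> n d \<longleftrightarrow>
     P0 \<le> P * (if d \<le> 1 then 1 else d powr (-\<alpha>)) * (real (\<Psi> n))\<^sup>2"

text \<open>Realisation: N BSs at positions x 0, ..., x (N-1); pair s has destination sigma s.\<close>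
definition achievable ::
  "real \<Rightarrow> real \<Rightarrow> real \<Rightarrow> (nat \<Rightarrow> nat) \<Rightarrow> real \<Rightarrow> nat \<Rightarrow> nat \<Rightarrow> (nat \<Rightarrow> real \<times> real)
    \<Rightarrow> (nat \<Rightarrow> nat) \<Rightarrow> real \<Rightarrow> bool" where
  "achievable P P0 \<alpha> \<Psi> C n N x \<sigma> \<rho> \<longleftrightarrow>
     (\<exists>route :: nat \<Rightarrow> nat list. \<exists>r :: nat \<Rightarrow> real.
        (\<forall>s<N. route s \<noteq> [] \<and> hd (route s) = s \<and> last (route s) = \<sigma> s
              \<and> set (route s) \<subseteq> {..<N}
              \<and> (\<forall>k. Suc k < length (route s) \<longrightarrow>
                     hop_ok P P0 \<alpha> \<Psi> n (dist (x (route s ! k)) (x (route s ! Suc k))))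
              \<and> 0 \<le> r s \<and> \<rho> \<le> r s)
      \<and> (\<forall>v<N. (\<Sum>s<N. if v \<in> set (butlast (route s)) then r s else 0) \<le> C))"

definition worst_rate_le ::
  "real \<Rightarrow> real \<Rightarrow> real \<Rightarrow> (nat \<Rightarrow> nat) \<Rightarrow> real \<Rightarrow> nat \<Rightarrow> nat \<Rightarrow> (nat \<Rightarrow> real \<times> real)
    \<Rightarrow> (nat \<Rightarrow> nat) \<Rightarrow> real \<Rightarrow> bool" where
  "worst_rate_le P P0 \<alpha> \<Psi> C n N x \<sigma> b \<longleftrightarrow>
     (\<forall>\<rho>. achievable P P0 \<alpha> \<Psi> C n N x \<sigma> \<rho> \<longrightarrow> \<rho> \<le> b)"

text \<open>Probability of an event E(N, x, sigma) of the random network: a homogeneous PPP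
  of density lambda_b on B_n (N ~ Poisson(lambda_b n), given N the points are iid uniform
  on B_n), and a uniformly random permutation sigma of the N BSs (source-destination pairs).\<close>
definition net_prob ::
  "real \<Rightarrow> nat \<Rightarrow> (nat \<Rightarrow> (nat \<Rightarrow> real \<times> real) \<Rightarrow> (nat \<Rightarrow> nat) \<Rightarrow> bool) \<Rightarrow> real" where
  "net_prob lam_b n E =
     (\<Sum>N. pmf (poisson_pmf (lam_b * real n)) N *
        ((\<Sum>\<sigma>\<in>{\<sigma>. \<sigma> permutes {..<N}}.
            measure (PiM {..<N} (\<lambda>_. uniform_measure lborel (bs_box n)))
              {x \<in> space (PiM {..<N} (\<lambda>_. uniform_measure lborel (bs_box n))). E N x \<sigma>})
         / fact N))"

end

theory Submission
  imports Defs
begin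

lemma path_bound:
  fixes x :: "nat \<Rightarrow> real \<times> real"
  assumes "l \<noteq> []" "\<And>k. Suc k < length l \<Longrightarrow> dist (x (l!k)) (x (l!Suc k)) \<le> D" "0 \<le> D"
  shows "dist (x (hd l)) (x (last l)) \<le> D * card (set (butlast l))"
  using assms
proof (induction "length l" arbitrary: l rule: less_induct)
  case less
  show ?case
  proof (cases "hd l \<in> set (tl l)")
    case True
    then obtain j where j: "j < length (tl l)" "tl l ! j = hd l" by (metis in_set_conv_nth)
    define l' where "l' = drop (Suc j) l"
    have ne: "l' \<noteq> []" using j unfolding l'_def by auto
    have hd': "hd l' = hd l" using j less.prems(1) unfolding l'_def
      by (metis drop_Suc hd_drop_conv_nth length_tl)
    have last': "last l' = last l" using ne unfolding l'_def by (simp add: last_drop)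
    have len: "length l' < length l" using less.prems(1) unfolding l'_def by auto
    have hops: "\<And>k. Suc k < length l' \<Longrightarrow> dist (x (l'!k)) (x (l'!Suc k)) \<le> D"
      using less.prems(2) unfolding l'_def by (simp add: add.commute)
    have IH: "dist (x (hd l')) (x (last l')) \<le> D * card (set (butlast l'))"
      using less.hyps[OF len ne hops less.prems(3)] .
    have "set (butlast l') \<subseteq> set (butlast l)" unfolding l'_def
      by (simp add: butlast_drop set_drop_subset)
    then have "card (set (butlast l')) \<le> card (set (butlast l))" by (simp add: card_mono)
    then have "D * card (set (butlast l')) \<le> D * card (set (butlast l))"
      using less.prems(3) by (simp add: mult_left_mono)
    then show ?thesis using IH hd' last' by simp
  next
    case False
    obtain a rest where l: "l = a # rest" using less.prems(1) by (cases l) auto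
    show ?thesis
    proof (cases "rest = []")
      case True then show ?thesis using l less.prems(3) by simp
    next
      case rne: False
      have notin: "a \<notin> set rest" using False l by simp
      have h1: "dist (x a) (x (hd rest)) \<le> D" using less.prems(2)[of 0] l rne
        by (simp add: hd_conv_nth)
      have hops: "\<And>k. Suc k < length rest \<Longrightarrow> dist (x (rest!k)) (x (rest!Suc k)) \<le> D"
        using less.prems(2) l by (metis Suc_less_eq length_Cons nth_Cons_Suc)
      have IH: "dist (x (hd rest)) (x (last rest)) \<le> D * card (set (butlast rest))"
        using less.hyps[of rest] l rne hops less.prems(3) by simp
      have bl: "butlast l = a # butlast rest" using l rne by simp
      have "a \<notin> set (butlast rest)" using notin in_set_butlastD by metis
      then have c: "card (set (butlast l)) = Suc (card (set (butlast rest)))" using bl by simp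
      have "dist (x (hd l)) (x (last l)) \<le> dist (x a) (x (hd rest)) + dist (x (hd rest)) (x (last rest))"
        using l rne by (simp add: dist_triangle)
      also have "\<dots> \<le> D + D * card (set (butlast rest))" using h1 IH by simp
      also have "\<dots> = D * card (set (butlast l))" using c by (simp add: algebra_simps)
      finally show ?thesis .
    qed
  qed
qed

lemma det_bound:
  assumes ach: "achievable P P0 \<alpha> \<Psi> C n N x \<sigma> \<rho>" and rho: "0 < \<rho>"
    and hop: "\<And>d. hop_ok P P0 \<alpha> \<Psi> n d \<Longrightarrow> d \<le> D" and D: "0 \<le> D"
  shows "\<rho> * (\<Sum>s<N. dist (x s) (x (\<sigma> s))) \<le> D * (real N * C)"
proof -
  obtain route r where
    R: "\<forall>s<N. route s \<noteq> [] \<and> hd (route s) = s \<and> last (route s) = \<sigma> s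
              \<and> set (route s) \<subseteq> {..<N}
              \<and> (\<forall>k. Suc k < length (route s) \<longrightarrow>
                     hop_ok P P0 \<alpha> \<Psi> n (dist (x (route s ! k)) (x (route s ! Suc k))))
              \<and> 0 \<le> r s \<and> \<rho> \<le> r s"
    and L: "\<forall>v<N. (\<Sum>s<N. if v \<in> set (butlast (route s)) then r s else 0) \<le> C"
    using ach unfolding achievable_def by blast
  have each: "\<rho> * dist (x s) (x (\<sigma> s)) \<le> D * (r s * card (set (butlast (route s))))" if s: "s < N" for s
  proof -
    have pb: "dist (x (hd (route s))) (x (last (route s))) \<le> D * card (set (butlast (route s)))"
      using R s by (intro path_bound[OF _ _ D]) (auto intro: hop)
    then have "dist (x s) (x (\<sigma> s)) \<le> D * card (set (butlast (route s)))" using R s by simp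
    then have "\<rho> * dist (x s) (x (\<sigma> s)) \<le> \<rho> * (D * card (set (butlast (route s))))"
      using rho by (simp add: mult_left_mono)
    also have "\<dots> \<le> r s * (D * card (set (butlast (route s))))"
      using R s D by (intro mult_right_mono) auto
    finally show ?thesis by (simp add: algebra_simps)
  qed
  have "\<rho> * (\<Sum>s<N. dist (x s) (x (\<sigma> s))) = (\<Sum>s<N. \<rho> * dist (x s) (x (\<sigma> s)))"
    by (simp add: sum_distrib_left)
  also have "\<dots> \<le> (\<Sum>s<N. D * (r s * card (set (butlast (route s)))))"
    using each by (intro sum_mono) auto
  also have "\<dots> = D * (\<Sum>s<N. r s * card (set (butlast (route s))))"
    by (simp add: sum_distrib_left)
  also have "(\<Sum>s<N. r s * card (set (butlast (route s)))) =
      (\<Sum>s<N. \<Sum>v<N. if v \<in> set (butlast (route s)) then r s else 0)"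
  proof (intro sum.cong refl)
    fix s assume "s \<in> {..<N}"
    then have sub: "set (butlast (route s)) \<subseteq> {..<N}" using R by (meson in_set_butlastD lessThan_iff subset_iff)
    have "(\<Sum>v<N. if v \<in> set (butlast (route s)) then r s else 0) = (\<Sum>v\<in>set (butlast (route s)). r s)"
      using sub by (simp add: sum.If_cases Int_absorb1 inf.absorb2)
    then show "r s * card (set (butlast (route s))) = (\<Sum>v<N. if v \<in> set (butlast (route s)) then r s else 0)"
      by simp
  qed
  also have "\<dots> = (\<Sum>v<N. \<Sum>s<N. if v \<in> set (butlast (route s)) then r s else 0)"
    by (rule sum.swap)
  also have "\<dots> \<le> (\<Sum>v<N. C)" using L by (intro sum_mono) auto
  also have "\<dots> = real N * C" by simp
  finally show ?thesis using D by (simp add: mult_left_mono)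
qed

lemma hop_bound:
  assumes P: "0 < P" "0 < P0" "0 < \<alpha>" and psi: "1 \<le> \<Psi> n"
    and h: "hop_ok P P0 \<alpha> \<Psi> n d"
  shows "d \<le> max 1 ((P / P0) powr (1/\<alpha>)) * real (\<Psi> n) powr (2/\<alpha>)"
proof -
  let ?c = "max 1 ((P / P0) powr (1/\<alpha>))"
  have psi1: "1 \<le> real (\<Psi> n) powr (2/\<alpha>)" using psi P by (simp add: ge_one_powr_ge_zero)
  show ?thesis
  proof (cases "d \<le> 1")
    case True
    have "1 \<le> ?c * real (\<Psi> n) powr (2/\<alpha>)" using psi1
      by (metis max.cobounded1 mult_mono' mult_1 zero_le_one)
    then show ?thesis using True by linarith
  next
    case False
    then have d: "1 < d" by simp
    have "P0 \<le> P * d powr (-\<alpha>) * (real (\<Psi> n))\<^sup>2" using h d unfolding hop_ok_def by simp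
    then have "P0 * d powr \<alpha> \<le> P * (real (\<Psi> n))\<^sup>2"
      using d by (simp add: powr_minus field_simps)
    then have "d powr \<alpha> \<le> P / P0 * (real (\<Psi> n))\<^sup>2" using P by (simp add: field_simps)
    then have "(d powr \<alpha>) powr (1/\<alpha>) \<le> (P / P0 * (real (\<Psi> n))\<^sup>2) powr (1/\<alpha>)"
      using d P by (intro powr_mono2) auto
    also have "(d powr \<alpha>) powr (1/\<alpha>) = d" using d P by (simp add: powr_powr)
    also have "(P / P0 * (real (\<Psi> n))\<^sup>2) powr (1/\<alpha>) = (P/P0) powr (1/\<alpha>) * ((real (\<Psi> n))\<^sup>2) powr (1/\<alpha>)"
      by (rule powr_mult)
    also have "((real (\<Psi> n))\<^sup>2) powr (1/\<alpha>) = real (\<Psi> n) powr (2/\<alpha>)"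
    proof -
      have "real (\<Psi> n) > 0" using psi by simp
      then have "(real (\<Psi> n))\<^sup>2 = real (\<Psi> n) powr 2" by (simp add: powr_realpow)
      then have "((real (\<Psi> n))\<^sup>2) powr (1/\<alpha>) = (real (\<Psi> n) powr 2) powr (1/\<alpha>)" by (simp only:)
      also have "\<dots> = real (\<Psi> n) powr (2 * (1/\<alpha>))" by (rule powr_powr)
      finally show ?thesis by simp
    qed
    also have "(P/P0) powr (1/\<alpha>) * real (\<Psi> n) powr (2/\<alpha>) \<le> ?c * real (\<Psi> n) powr (2/\<alpha>)"
      using psi1 by (intro mult_right_mono) auto
    finally show ?thesis .
  qed
qed

definition Um :: "nat \<Rightarrow> (real \<times> real) measure" where
  "Um n = uniform_measure lborel (bs_box n)"

lemma box_meas: "emeasure lborel (bs_box n) = ennreal (real n)"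
  unfolding bs_box_def
  by (simp add: emeasure_lborel_cbox_eq Basis_prod_def)

lemma box_sets[measurable]: "bs_box n \<in> sets lborel"
  unfolding bs_box_def by simp

lemma prob_Um: "1 \<le> n \<Longrightarrow> prob_space (Um n)"
  unfolding Um_def by (rule prob_space_uniform_measure) (auto simp: box_meas)

lemma space_Um[simp]: "space (Um n) = UNIV" and sets_Um[simp, measurable_cong]: "sets (Um n) = sets borel"
  unfolding Um_def by auto

lemma cbox_fm: "cbox (a::real\<times>real) b \<in> fmeasurable lborel"
  apply (rule fmeasurableI)
  apply (simp only: sets_lborel) apply (rule borel_closed) apply (rule closed_cbox)
  using emeasure_lborel_cbox_finite[of a b]
  apply assumption
  done

lemma strip:
  assumes n: "1 \<le> n" and r: "0 \<le> r"
  shows "measure (Um n) {y. \<bar>fst y - c\<bar> < r} \<le> 2 * r / sqrt (real n)"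
proof -
  have meas: "{y::real\<times>real. \<bar>fst y - c\<bar> < r} \<in> sets lborel"
    unfolding sets_lborel by (intro borel_open open_Collect_less continuous_intros)
  have "measure (Um n) {y. \<bar>fst y - c\<bar> < r} =
      measure lborel (bs_box n \<inter> {y. \<bar>fst y - c\<bar> < r}) / measure lborel (bs_box n)"
    unfolding Um_def using n meas by (subst measure_uniform_measure) (auto simp: box_meas)
  also have "measure lborel (bs_box n) = real n" using box_meas by (simp add: measure_def)
  also have "measure lborel (bs_box n \<inter> {y. \<bar>fst y - c\<bar> < r}) \<le>
       measure lborel (cbox (c - r, 0) (c + r, sqrt (real n)))"
  proof (rule measure_mono_fmeasurable)
    show "bs_box n \<inter> {y. \<bar>fst y - c\<bar> < r} \<subseteq> cbox (c - r, 0) (c + r, sqrt (real n))"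
      unfolding bs_box_def by (auto simp: cbox_def Basis_prod_def inner_prod_def)
    show "bs_box n \<inter> {y. \<bar>fst y - c\<bar> < r} \<in> sets lborel" using meas by simp
    show "cbox (c - r, 0) (c + r, sqrt (real n)) \<in> fmeasurable lborel"
      by (rule cbox_fm)
  qed
  also have "measure lborel (cbox (c - r, 0) (c + r, sqrt (real n))) = 2 * r * sqrt (real n)"
    using r by (simp add: measure_def emeasure_lborel_cbox_eq Basis_prod_def)
  finally have "measure (Um n) {y. \<bar>fst y - c\<bar> < r} \<le> 2 * r * sqrt (real n) / real n"
    using n by (simp add: divide_right_mono)
  also have "2 * r * sqrt (real n) / real n = 2 * r / sqrt (real n)"
  proof -
    have "sqrt (real n) > 0" using n by simp
    moreover have "real n = sqrt (real n) * sqrt (real n)" by simp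
    ultimately show ?thesis by (metis nonzero_mult_divide_mult_cancel_right2 less_irrefl times_divide_eq_right mult.assoc)
  qed
  finally show ?thesis .
qed

lemma fst_meas[measurable]: "(fst :: real\<times>real \<Rightarrow> real) \<in> borel_measurable borel"
  by (intro borel_measurable_continuous_onI continuous_intros)

lemma meas_pair_event:
  assumes [measurable]: "s \<in> I" "t \<in> I"
  shows "{x \<in> space (PiM I (\<lambda>_. Um n)). \<bar>fst (x s) - fst (x t)\<bar> < r} \<in> sets (PiM I (\<lambda>_. Um n))"
  by measurable

lemma pair_strip:
  fixes I :: "nat set"
  assumes n: "1 \<le> n" and r: "0 \<le> r" and I: "finite I" "s \<in> I" "t \<in> I" "s \<noteq> t"
  shows "measure (PiM I (\<lambda>_. Um n)) {x \<in> space (PiM I (\<lambda>_. Um n)). \<bar>fst (x s) - fst (x t)\<bar> < r}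
     \<le> 2 * r / sqrt (real n)"
proof -
  let ?M = "\<lambda>_::nat. Um n"
  let ?S = "{x \<in> space (PiM I ?M). \<bar>fst (x s) - fst (x t)\<bar> < r}"
  have pU: "prob_space (Um n)" using prob_Um[OF n] .
  interpret PS: product_sigma_finite ?M
    using pU by (simp add: product_sigma_finite_def prob_space_imp_sigma_finite)
  define J where "J = I - {t}"
  have IJ: "I = insert t J" "t \<notin> J" "finite J" "s \<in> J" using I unfolding J_def by auto
  have pJ: "prob_space (PiM J ?M)" using pU by (intro prob_space_PiM) auto
  have Smeas: "?S \<in> sets (PiM I ?M)" using I by (intro meas_pair_event)
  have "emeasure (PiM I ?M) ?S = (\<integral>\<^sup>+x. indicator ?S x \<partial>PiM I ?M)"
    using Smeas by simp
  also have "\<dots> = (\<integral>\<^sup>+x. (\<integral>\<^sup>+y. indicator ?S (x(t := y)) \<partial>Um n) \<partial>PiM J ?M)"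
    unfolding IJ(1) using IJ Smeas
    by (intro PS.product_nn_integral_insert) (auto simp: IJ(1)[symmetric])
  also have "\<dots> \<le> (\<integral>\<^sup>+x. ennreal (2 * r / sqrt (real n)) \<partial>PiM J ?M)"
  proof (rule nn_integral_mono)
    fix x assume x: "x \<in> space (PiM J ?M)"
    have "(\<lambda>y. indicator ?S (x(t := y)) :: ennreal) = indicator {y. \<bar>fst y - fst (x s)\<bar> < r}"
    proof
      fix y
      have "x(t := y) \<in> space (PiM I ?M)" using x IJ by (auto simp: space_PiM PiE_iff)
      moreover have "(x(t := y)) s = x s" "(x(t := y)) t = y" using IJ by auto
      ultimately show "indicator ?S (x(t := y)) = (indicator {y. \<bar>fst y - fst (x s)\<bar> < r} y :: ennreal)"
        by (auto simp: indicator_def abs_minus_commute)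
    qed
    then have "(\<integral>\<^sup>+y. indicator ?S (x(t := y)) \<partial>Um n) = emeasure (Um n) {y. \<bar>fst y - fst (x s)\<bar> < r}"
      by (simp add: )
    also have "\<dots> = ennreal (measure (Um n) {y. \<bar>fst y - fst (x s)\<bar> < r})"
      using pU by (simp add: finite_measure.emeasure_eq_measure prob_space_def)
    also have "\<dots> \<le> ennreal (2 * r / sqrt (real n))"
      using strip[OF n r] by (simp add: ennreal_leI)
    finally show "(\<integral>\<^sup>+y. indicator ?S (x(t := y)) \<partial>Um n) \<le> ennreal (2 * r / sqrt (real n))" .
  qed
  also have "\<dots> = ennreal (2 * r / sqrt (real n))"
    using pJ by (simp add: prob_space.emeasure_space_1)
  finally have "emeasure (PiM I ?M) ?S \<le> ennreal (2 * r / sqrt (real n))" .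
  then show ?thesis using r by (simp add: measure_def enn2real_leI)
qed

definition Hof :: "real \<Rightarrow> real \<Rightarrow> real \<Rightarrow> (nat \<Rightarrow> nat) \<Rightarrow> nat \<Rightarrow> nat \<Rightarrow> (nat \<Rightarrow> real \<times> real) \<Rightarrow> nat \<times> nat \<Rightarrow> bool" where
  "Hof P P0 \<alpha> \<Psi> n N x = (\<lambda>(i,j). i < N \<and> j < N \<and> hop_ok P P0 \<alpha> \<Psi> n (dist (x i) (x j)))"

lemma achievable_H:
  assumes "Hof P P0 \<alpha> \<Psi> n N x = Hof P P0 \<alpha> \<Psi> n N y" "achievable P P0 \<alpha> \<Psi> C n N x \<sigma> \<rho>"
  shows "achievable P P0 \<alpha> \<Psi> C n N y \<sigma> \<rho>"
proof -
  have eq: "hop_ok P P0 \<alpha> \<Psi> n (dist (x i) (x j)) = hop_ok P P0 \<alpha> \<Psi> n (dist (y i) (y j))"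
    if "i < N" "j < N" for i j
    using fun_cong[OF assms(1), of "(i,j)"] that unfolding Hof_def by simp
  from assms(2) obtain route r where
    R: "\<forall>s<N. route s \<noteq> [] \<and> hd (route s) = s \<and> last (route s) = \<sigma> s
              \<and> set (route s) \<subseteq> {..<N}
              \<and> (\<forall>k. Suc k < length (route s) \<longrightarrow>
                     hop_ok P P0 \<alpha> \<Psi> n (dist (x (route s ! k)) (x (route s ! Suc k))))
              \<and> 0 \<le> r s \<and> \<rho> \<le> r s"
    and L: "\<forall>v<N. (\<Sum>s<N. if v \<in> set (butlast (route s)) then r s else 0) \<le> C"
    unfolding achievable_def by blast
  have "\<forall>s<N. \<forall>k. Suc k < length (route s) \<longrightarrow>
                     hop_ok P P0 \<alpha> \<Psi> n (dist (y (route s ! k)) (y (route s ! Suc k)))"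
  proof (intro allI impI)
    fix s k assume s: "s < N" and k: "Suc k < length (route s)"
    have "route s ! k \<in> set (route s)" "route s ! Suc k \<in> set (route s)" using k by auto
    then have "route s ! k < N" "route s ! Suc k < N" using R s by auto
    then show "hop_ok P P0 \<alpha> \<Psi> n (dist (y (route s ! k)) (y (route s ! Suc k)))"
      using eq R s k by metis
  qed
  then show ?thesis unfolding achievable_def using R L by blast
qed

lemma hop_meas[measurable]: "(\<lambda>d. hop_ok P P0 \<alpha> \<Psi> n d) \<in> measurable borel (count_space UNIV)"
proof -
  have f: "(\<lambda>d::real. if d \<le> 1 then 1 else d powr (-\<alpha>)) \<in> borel_measurable borel"
    by (rule measurable_If) (auto intro!: powr_real_measurable)
  have g: "(\<lambda>d::real. P * (if d \<le> 1 then 1 else d powr (-\<alpha>)) * (real (\<Psi> n))\<^sup>2) \<in> borel_measurable borel"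
    using f by (intro borel_measurable_times borel_measurable_const) auto
  then have "Measurable.pred borel (\<lambda>d::real. P0 \<le> P * (if d \<le> 1 then 1 else d powr (-\<alpha>)) * (real (\<Psi> n))\<^sup>2)"
    unfolding pred_def using borel_measurable_le[OF borel_measurable_const g] by simp
  then show ?thesis unfolding hop_ok_def pred_def .
qed

lemma meas_E:
  "{x \<in> space (PiM {..<N} (\<lambda>_. Um n)). worst_rate_le P P0 \<alpha> \<Psi> C n N x \<sigma> b} \<in> sets (PiM {..<N} (\<lambda>_. Um n))"
proof -
  let ?M = "PiM {..<N} (\<lambda>_. Um n)"
  let ?H = "Hof P P0 \<alpha> \<Psi> n N"
  let ?E = "{x \<in> space ?M. worst_rate_le P P0 \<alpha> \<Psi> C n N x \<sigma> b}"
  have inv: "worst_rate_le P P0 \<alpha> \<Psi> C n N x \<sigma> b \<Longrightarrow> ?H x = ?H y \<Longrightarrow> worst_rate_le P P0 \<alpha> \<Psi> C n N y \<sigma> b" for x y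
  proof (unfold worst_rate_le_def, intro allI impI)
    fix \<rho> assume a: "\<forall>\<rho>. achievable P P0 \<alpha> \<Psi> C n N x \<sigma> \<rho> \<longrightarrow> \<rho> \<le> b"
      "?H x = ?H y" "achievable P P0 \<alpha> \<Psi> C n N y \<sigma> \<rho>"
    then show "\<rho> \<le> b" using achievable_H[of P P0 \<alpha> \<Psi> n N y x C \<sigma> \<rho>] by simp
  qed
  have eqU: "?E = (\<Union>h\<in>?H ` ?E. {x \<in> space ?M. ?H x = h})"
  proof
    show "?E \<subseteq> (\<Union>h\<in>?H ` ?E. {x \<in> space ?M. ?H x = h})" by blast
    show "(\<Union>h\<in>?H ` ?E. {x \<in> space ?M. ?H x = h}) \<subseteq> ?E"
    proof
      fix y assume "y \<in> (\<Union>h\<in>?H ` ?E. {x \<in> space ?M. ?H x = h})"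
      then obtain x where "x \<in> ?E" "y \<in> space ?M" "?H y = ?H x" by blast
      then show "y \<in> ?E" using inv[of x y] by simp
    qed
  qed
  have fin: "finite (?H ` ?E)"
  proof (rule finite_subset)
    show "?H ` ?E \<subseteq> (\<lambda>S p. p \<in> S) ` Pow ({..<N} \<times> {..<N})"
    proof
      fix h assume "h \<in> ?H ` ?E"
      then obtain x where h: "h = ?H x" by blast
      show "h \<in> (\<lambda>S p. p \<in> S) ` Pow ({..<N} \<times> {..<N})"
        by (rule image_eqI[of _ _ "{p. h p}"]) (auto simp: h Hof_def)
    qed
  qed simp
  have each: "{x \<in> space ?M. ?H x = h} \<in> sets ?M" for h
  proof -
    have "{x \<in> space ?M. ?H x = h} = {x \<in> space ?M. \<forall>p\<in>UNIV. ?H x p = h p}"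
      by (auto simp: fun_eq_iff)
    also have "\<dots> = {x \<in> space ?M. (\<forall>p\<in>{..<N}\<times>{..<N}. hop_ok P P0 \<alpha> \<Psi> n (dist (x (fst p)) (x (snd p))) = h p)
          \<and> (\<forall>p\<in>UNIV - {..<N}\<times>{..<N}. \<not> h p)}"
      by (auto simp: Hof_def)
    also have "\<dots> \<in> sets ?M"
    proof (cases "\<forall>p\<in>UNIV - {..<N}\<times>{..<N}. \<not> h p")
      case True
      have "Measurable.pred ?M (\<lambda>x. \<forall>p\<in>{..<N}\<times>{..<N}. hop_ok P P0 \<alpha> \<Psi> n (dist (x (fst p)) (x (snd p))) = h p)"
      proof (intro pred_intros_finite)
        show "finite ({..<N}\<times>{..<N})" by simp
        fix p assume p: "p \<in> {..<N}\<times>{..<N}"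
        then have [measurable]: "fst p \<in> {..<N}" "snd p \<in> {..<N}" by auto
        show "Measurable.pred ?M (\<lambda>x. hop_ok P P0 \<alpha> \<Psi> n (dist (x (fst p)) (x (snd p))) = h p)"
          by measurable
      qed
      then show ?thesis using True by (simp add: pred_def)
    next
      case False then show ?thesis by simp
    qed
    finally show ?thesis .
  qed
  show ?thesis by (subst eqU) (intro sets.finite_UN fin each)
qed

lemma good_prob:
  fixes N :: nat and \<sigma> :: "nat \<Rightarrow> nat"
  assumes n: "1 \<le> n" and N: "1 \<le> N" and \<sigma>: "\<sigma> permutes {..<N}" and \<delta>: "0 < \<delta>"
    and hop: "\<And>d. hop_ok P P0 \<alpha> \<Psi> n d \<Longrightarrow> d \<le> D" and D: "0 \<le> D" and C: "0 < C"
    and b: "2 * D * C / (\<delta> * sqrt (real n)) \<le> b"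
  shows "1 - 2 / real N * (\<Sum>s<N. if \<sigma> s = s then 1 else 2 * \<delta>) \<le>
     measure (PiM {..<N} (\<lambda>_. Um n)) {x \<in> space (PiM {..<N} (\<lambda>_. Um n)). worst_rate_le P P0 \<alpha> \<Psi> C n N x \<sigma> b}"
proof -
  let ?M = "PiM {..<N} (\<lambda>_. Um n)"
  define r where "r = \<delta> * sqrt (real n)"
  have r: "0 < r" using \<delta> n unfolding r_def by simp
  have pU: "prob_space (Um n)" using prob_Um[OF n] .
  interpret M: prob_space ?M using pU by (intro prob_space_PiM) auto
  define A where "A s = {x \<in> space ?M. \<bar>fst (x s) - fst (x (\<sigma> s))\<bar> < r}" for s
  have \<sigma>in: "\<sigma> s \<in> {..<N}" if "s < N" for s using permutes_in_image[OF \<sigma>, of s] that by simp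
  have Ameas: "A s \<in> sets ?M" if "s < N" for s
    unfolding A_def using \<sigma>in[OF that] that by (intro meas_pair_event) auto
  define u where "u x = (\<Sum>s<N. indicator (A s) x :: real)" for x
  have ii: "integrable ?M (indicator (A s) :: _ \<Rightarrow> real)" if "s < N" for s
    using Ameas[OF that] by (rule integrable_real_indicator) (simp add: less_top[symmetric] M.emeasure_finite)
  have uint: "integrable ?M u" unfolding u_def
    using ii by (intro Bochner_Integration.integrable_sum) auto
  have uint_eq: "(\<integral>x. u x \<partial>?M) = (\<Sum>s<N. measure ?M (A s))"
  proof -
    have "(\<integral>x. u x \<partial>?M) = (\<Sum>s<N. (\<integral>x. indicator (A s) x \<partial>?M))"
      unfolding u_def using ii by (rule Bochner_Integration.integral_sum) simp
    also have "\<dots> = (\<Sum>s<N. measure ?M (A s))"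
      using Ameas by (intro sum.cong refl) (auto simp: sets.sets_into_space Int_absorb2)
    finally show ?thesis .
  qed
  have Ale: "measure ?M (A s) \<le> (if \<sigma> s = s then 1 else 2 * \<delta>)" if "s < N" for s
  proof (cases "\<sigma> s = s")
    case True then show ?thesis by (simp add: M.prob_le_1)
  next
    case False
    have "measure ?M (A s) \<le> 2 * r / sqrt (real n)"
      unfolding A_def using \<sigma>in[OF that] that False r by (intro pair_strip n) auto
    also have "2 * r / sqrt (real n) = 2 * \<delta>" using n unfolding r_def by simp
    finally show ?thesis using False by simp
  qed
  define B where "B = {x \<in> space ?M. real N / 2 \<le> u x}"
  have Bmeas: "B \<in> sets ?M" unfolding B_def
    using borel_measurable_le[OF borel_measurable_const borel_measurable_integrable[OF uint], of "real N / 2"] by (simp only:)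
  have "measure ?M B \<le> (\<integral>x. u x \<partial>?M) / (real N / 2)"
    unfolding B_def using N
    by (intro integral_Markov_inequality_measure[OF uint, of "space ?M"])
       (auto simp: u_def intro!: sum_nonneg)
  also have "\<dots> \<le> (\<Sum>s<N. if \<sigma> s = s then 1 else 2 * \<delta>) / (real N / 2)"
    unfolding uint_eq using N Ale by (intro divide_right_mono sum_mono) auto
  finally have Ble: "measure ?M B \<le> 2 / real N * (\<Sum>s<N. if \<sigma> s = s then 1 else 2 * \<delta>)"
    by (simp add: field_simps)
  have sub: "space ?M - B \<subseteq> {x \<in> space ?M. worst_rate_le P P0 \<alpha> \<Psi> C n N x \<sigma> b}"
  proof safe
    fix x assume x: "x \<in> space ?M" and nB: "x \<notin> B"
    have ux: "u x < real N / 2" using x nB unfolding B_def by auto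
    have termwise: "r * (1 - indicator (A s) x) \<le> dist (x s) (x (\<sigma> s))" for s
    proof (cases "x \<in> A s")
      case True then show ?thesis by simp
    next
      case False
      then have "r \<le> \<bar>fst (x s) - fst (x (\<sigma> s))\<bar>" using x unfolding A_def by auto
      also have "\<dots> = dist (fst (x s)) (fst (x (\<sigma> s)))" by (simp add: dist_real_def)
      also have "\<dots> \<le> dist (x s) (x (\<sigma> s))" by (rule dist_fst_le)
      finally show ?thesis using False by simp
    qed
    have "r * (real N - u x) = (\<Sum>s<N. r * (1 - indicator (A s) x))"
      unfolding u_def by (simp add: sum_subtractf sum_distrib_left algebra_simps)
    also have "\<dots> \<le> (\<Sum>s<N. dist (x s) (x (\<sigma> s)))" by (intro sum_mono termwise)
    finally have Sge: "r * (real N - u x) \<le> (\<Sum>s<N. dist (x s) (x (\<sigma> s)))" .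
    have Sge2: "r * real N / 2 \<le> (\<Sum>s<N. dist (x s) (x (\<sigma> s)))"
    proof -
      have "r * (real N / 2) \<le> r * (real N - u x)" using ux r by (intro mult_left_mono) auto
      then show ?thesis using Sge by simp
    qed
    have Spos: "0 < r * real N / 2" using r N by simp
    show "worst_rate_le P P0 \<alpha> \<Psi> C n N x \<sigma> b"
      unfolding worst_rate_le_def
    proof (intro allI impI)
      fix \<rho> assume ach: "achievable P P0 \<alpha> \<Psi> C n N x \<sigma> \<rho>"
      have "0 \<le> 2 * D * C / (\<delta> * sqrt (real n))" using D C r unfolding r_def
        by (intro divide_nonneg_pos) auto
      then have b0: "0 \<le> b" using b by linarith
      show "\<rho> \<le> b"
      proof (cases "\<rho> \<le> 0")
        case True then show ?thesis using b0 by simp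
      next
        case False
        then have \<rho>: "0 < \<rho>" by simp
        have "\<rho> * (r * real N / 2) \<le> \<rho> * (\<Sum>s<N. dist (x s) (x (\<sigma> s)))"
          using Sge2 \<rho> by (simp add: mult_left_mono)
        also have "\<dots> \<le> D * (real N * C)" by (rule det_bound[OF ach \<rho> hop D])
        finally have "\<rho> * (r * real N / 2) \<le> D * (real N * C)" .
        then have "\<rho> \<le> D * (real N * C) / (r * real N / 2)" using Spos by (subst pos_le_divide_eq[OF Spos])
        also have "D * (real N * C) / (r * real N / 2) = 2 * D * C / r" using N r by (simp add: field_simps)
        finally show ?thesis using b unfolding r_def by simp
      qed
    qed
  qed
  have "1 - 2 / real N * (\<Sum>s<N. if \<sigma> s = s then 1 else 2 * \<delta>) \<le> 1 - measure ?M B" using Ble by simp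
  also have "\<dots> = measure ?M (space ?M - B)" using Bmeas by (simp add: M.prob_compl)
  also have "\<dots> \<le> measure ?M {x \<in> space ?M. worst_rate_le P P0 \<alpha> \<Psi> C n N x \<sigma> b}"
    using sub meas_E by (intro M.finite_measure_mono) auto
  finally show ?thesis .
qed

lemma perm_fix_eq:
  assumes "s \<in> S"
  shows "{\<sigma>. \<sigma> permutes S \<and> \<sigma> s = s} = {\<sigma>. \<sigma> permutes (S - {s})}"
proof (intro equalityI subsetI)
  fix \<sigma> assume "\<sigma> \<in> {\<sigma>. \<sigma> permutes S \<and> \<sigma> s = s}"
  then have a: "\<sigma> permutes S" and b: "\<sigma> s = s" by auto
  have c: "\<And>x. x \<in> S - (S - {s}) \<Longrightarrow> \<sigma> x = x" using b by blast
  show "\<sigma> \<in> {\<sigma>. \<sigma> permutes (S - {s})}" using permutes_superset[where T="S - {s}", OF a c] by simp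
next
  fix \<sigma> assume "\<sigma> \<in> {\<sigma>. \<sigma> permutes (S - {s})}"
  then have a: "\<sigma> permutes (S - {s})" by simp
  have "S - {s} \<subseteq> S" by blast
  from permutes_subset[OF a this] have "\<sigma> permutes S" .
  moreover have "\<sigma> s = s" using permutes_not_in[OF a] by blast
  ultimately show "\<sigma> \<in> {\<sigma>. \<sigma> permutes S \<and> \<sigma> s = s}" by simp
qed

lemma fix_sum:
  assumes N: "1 \<le> N"
  shows "(\<Sum>\<sigma>\<in>{\<sigma>. \<sigma> permutes {..<N}}. \<Sum>s<N. (if \<sigma> s = s then 1 else 0 :: real)) = real N * fact (N - 1)"
proof -
  have fin: "finite {\<sigma>. \<sigma> permutes {..<N}}" by (rule finite_permutations) simp
  have "(\<Sum>\<sigma>\<in>{\<sigma>. \<sigma> permutes {..<N}}. \<Sum>s<N. (if \<sigma> s = s then 1 else 0 :: real))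
      = (\<Sum>s<N. \<Sum>\<sigma>\<in>{\<sigma>. \<sigma> permutes {..<N}}. (if \<sigma> s = s then 1 else 0 :: real))"
    by (rule sum.swap)
  also have "\<dots> = (\<Sum>s<N. real (fact (N - 1)))"
  proof (intro sum.cong refl)
    fix s assume s: "s \<in> {..<N}"
    have "(\<Sum>\<sigma>\<in>{\<sigma>. \<sigma> permutes {..<N}}. (if \<sigma> s = s then 1 else 0 :: real))
        = real (card {\<sigma>\<in>{\<sigma>. \<sigma> permutes {..<N}}. \<sigma> s = s})"
      using fin by (simp add: sum.If_cases Int_def)
    also have "{\<sigma>\<in>{\<sigma>. \<sigma> permutes {..<N}}. \<sigma> s = s} = {\<sigma>. \<sigma> permutes ({..<N} - {s})}"
      using perm_fix_eq[OF s] by simp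
    also have "card \<dots> = fact (N - 1)"
      using s by (intro card_permutations) auto
    finally show "(\<Sum>\<sigma>\<in>{\<sigma>. \<sigma> permutes {..<N}}. (if \<sigma> s = s then 1 else 0 :: real)) = real (fact (N - 1))"
      by simp
  qed
  also have "\<dots> = real N * fact (N - 1)" by simp
  finally show ?thesis .
qed

lemma avg_bound:
  fixes N :: nat
  assumes n: "1 \<le> n" and N: "1 \<le> N" and \<delta>: "0 < \<delta>"
    and hop: "\<And>d. hop_ok P P0 \<alpha> \<Psi> n d \<Longrightarrow> d \<le> D" and D: "0 \<le> D" and C: "0 < C"
    and b: "2 * D * C / (\<delta> * sqrt (real n)) \<le> b"
  shows "1 - 4 * \<delta> - 2 / real N \<le>
    (\<Sum>\<sigma>\<in>{\<sigma>. \<sigma> permutes {..<N}}. measure (PiM {..<N} (\<lambda>_. Um n))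
        {x \<in> space (PiM {..<N} (\<lambda>_. Um n)). worst_rate_le P P0 \<alpha> \<Psi> C n N x \<sigma> b}) / fact N"
proof -
  let ?Pm = "{\<sigma>. \<sigma> permutes {..<N}}"
  let ?f = "\<lambda>\<sigma>. (\<Sum>s<N. (if \<sigma> s = s then 1 else 0 :: real))"
  have card: "card ?Pm = fact N" by (rule card_permutations) auto
  have step: "1 - 4 * \<delta> - 2 / real N * ?f \<sigma> \<le>
      measure (PiM {..<N} (\<lambda>_. Um n))
        {x \<in> space (PiM {..<N} (\<lambda>_. Um n)). worst_rate_le P P0 \<alpha> \<Psi> C n N x \<sigma> b}"
    if \<sigma>: "\<sigma> \<in> ?Pm" for \<sigma>
  proof -
    have "(\<Sum>s<N. if \<sigma> s = s then 1 else 2 * \<delta>) \<le> (\<Sum>s<N. 2 * \<delta> + (if \<sigma> s = s then 1 else 0))"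
      using \<delta> by (intro sum_mono) auto
    also have "\<dots> = 2 * \<delta> * real N + ?f \<sigma>" by (simp add: sum.distrib)
    finally have le: "(\<Sum>s<N. if \<sigma> s = s then 1 else 2 * \<delta>) \<le> 2 * \<delta> * real N + ?f \<sigma>" .
    have "2 / real N * (\<Sum>s<N. if \<sigma> s = s then 1 else 2 * \<delta>) \<le> 2 / real N * (2 * \<delta> * real N + ?f \<sigma>)"
      using le by (intro mult_left_mono) auto
    also have "\<dots> = 4 * \<delta> + 2 / real N * ?f \<sigma>" using N by (simp add: field_simps)
    finally have "1 - 4 * \<delta> - 2 / real N * ?f \<sigma> \<le> 1 - 2 / real N * (\<Sum>s<N. if \<sigma> s = s then 1 else 2 * \<delta>)"
      by simp
    also have "\<dots> \<le> measure (PiM {..<N} (\<lambda>_. Um n))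
        {x \<in> space (PiM {..<N} (\<lambda>_. Um n)). worst_rate_le P P0 \<alpha> \<Psi> C n N x \<sigma> b}" using \<sigma> by (intro good_prob[OF n N _ \<delta> hop D C b]) auto
    finally show ?thesis .
  qed
  have "(\<Sum>\<sigma>\<in>?Pm. 1 - 4 * \<delta> - 2 / real N * ?f \<sigma>) \<le>
      (\<Sum>\<sigma>\<in>?Pm. measure (PiM {..<N} (\<lambda>_. Um n))
        {x \<in> space (PiM {..<N} (\<lambda>_. Um n)). worst_rate_le P P0 \<alpha> \<Psi> C n N x \<sigma> b})"
    by (intro sum_mono step)
  moreover have "(\<Sum>\<sigma>\<in>?Pm. 1 - 4 * \<delta> - 2 / real N * ?f \<sigma>) =
      fact N * (1 - 4 * \<delta>) - 2 / real N * (real N * fact (N - 1))"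
  proof -
    have "(\<Sum>\<sigma>\<in>?Pm. 1 - 4 * \<delta> - 2 / real N * ?f \<sigma>) = (\<Sum>\<sigma>\<in>?Pm. 1 - 4 * \<delta>) - (\<Sum>\<sigma>\<in>?Pm. 2 / real N * ?f \<sigma>)"
      by (rule sum_subtractf)
    also have "(\<Sum>\<sigma>\<in>?Pm. 2 / real N * ?f \<sigma>) = 2 / real N * (\<Sum>\<sigma>\<in>?Pm. ?f \<sigma>)"
      by (rule sum_distrib_left[symmetric])
    also have "(\<Sum>\<sigma>\<in>?Pm. ?f \<sigma>) = real N * fact (N - 1)" by (rule fix_sum[OF N])
    also have "(\<Sum>\<sigma>\<in>?Pm. 1 - 4 * \<delta>) = fact N * (1 - 4 * \<delta>)" using card by simp
    finally show ?thesis .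
  qed
  moreover have "fact N * (1 - 4 * \<delta>) - 2 / real N * (real N * fact (N - 1)) = fact N * (1 - 4 * \<delta> - 2 / real N)"
  proof -
    have "fact N = real N * fact (N - 1)" using N by (simp add: fact_reduce)
    then show ?thesis using N by (simp add: field_simps)
  qed
  ultimately have "fact N * (1 - 4 * \<delta> - 2 / real N) \<le> (\<Sum>\<sigma>\<in>?Pm. measure (PiM {..<N} (\<lambda>_. Um n))
        {x \<in> space (PiM {..<N} (\<lambda>_. Um n)). worst_rate_le P P0 \<alpha> \<Psi> C n N x \<sigma> b})" by simp
  then show ?thesis by (simp add: field_simps)
qed

lemma poisson_series:
  fixes q :: "nat \<Rightarrow> real"
  assumes \<mu>: "0 < \<mu>" and q01: "\<And>N. 0 \<le> q N \<and> q N \<le> 1"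
    and qlow: "\<And>N. 1 - a - 4 / (real N + 1) \<le> q N"
  shows "1 - a - 4 / \<mu> \<le> (\<Sum>N. pmf (poisson_pmf \<mu>) N * q N)"
    and "(\<Sum>N. pmf (poisson_pmf \<mu>) N * q N) \<le> 1"
proof -
  define p where "p N = \<mu> ^ N / fact N * exp (-\<mu>)" for N
  have pe: "pmf (poisson_pmf \<mu>) N = p N" for N unfolding p_def using \<mu> by simp
  have p0: "0 \<le> p N" for N unfolding p_def using \<mu> by simp
  have "(\<lambda>N. \<mu> ^ N / fact N) sums exp \<mu>"
    using exp_converges[of \<mu>] by (simp add: divide_inverse mult.commute)
  then have "(\<lambda>N. \<mu> ^ N / fact N * exp (-\<mu>)) sums (exp \<mu> * exp (-\<mu>))" by (rule sums_mult2)
  then have psum: "p sums 1" unfolding p_def by (simp add: exp_minus)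
  then have "(\<lambda>N. p (Suc N)) sums (1 - p 0)" by (simp add: sums_Suc_iff)
  then have "(\<lambda>N. p (Suc N) / \<mu>) sums ((1 - p 0) / \<mu>)" by (rule sums_divide)
  moreover have "p (Suc N) / \<mu> = p N / (real N + 1)" for N
  proof -
    have "p (Suc N) = \<mu> * p N / (real N + 1)" unfolding p_def
      by (simp add: fact_Suc field_simps)
    then show ?thesis using \<mu> by simp
  qed
  ultimately have p2: "(\<lambda>N. p N / (real N + 1)) sums ((1 - p 0) / \<mu>)" by simp
  have low: "(\<lambda>N. p N * (1 - a) - 4 * (p N / (real N + 1))) sums (1 * (1 - a) - 4 * ((1 - p 0) / \<mu>))"
    by (intro sums_diff sums_mult2 sums_mult psum p2)
  have summ: "summable (\<lambda>N. p N * q N)"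
  proof (rule summable_comparison_test)
    show "\<exists>N0. \<forall>N\<ge>N0. norm (p N * q N) \<le> p N"
      using p0 q01 by (auto intro!: exI[of _ 0] simp: abs_mult mult_left_le)
    show "summable p" using psum by (rule sums_summable)
  qed
  have "1 * (1 - a) - 4 * ((1 - p 0) / \<mu>) \<le> (\<Sum>N. p N * q N)"
  proof -
    have "(\<Sum>N. p N * (1 - a) - 4 * (p N / (real N + 1))) \<le> (\<Sum>N. p N * q N)"
    proof (rule suminf_le)
      fix N
      have "p N * (1 - a - 4 / (real N + 1)) \<le> p N * q N" using qlow p0 by (intro mult_left_mono)
      then show "p N * (1 - a) - 4 * (p N / (real N + 1)) \<le> p N * q N" by (simp add: algebra_simps)
      show "summable (\<lambda>N. p N * (1 - a) - 4 * (p N / (real N + 1)))" using low by (rule sums_summable)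
      show "summable (\<lambda>N. p N * q N)" by (rule summ)
    qed
    then show ?thesis using low by (simp add: sums_iff)
  qed
  moreover have "4 * ((1 - p 0) / \<mu>) \<le> 4 / \<mu>" using p0[of 0] \<mu> by (simp add: divide_right_mono)
  ultimately show "1 - a - 4 / \<mu> \<le> (\<Sum>N. pmf (poisson_pmf \<mu>) N * q N)" unfolding pe by simp
  have "(\<Sum>N. p N * q N) \<le> (\<Sum>N. p N)"
    using summ psum p0 q01 by (intro suminf_le) (auto simp: sums_summable mult_left_le)
  then show "(\<Sum>N. pmf (poisson_pmf \<mu>) N * q N) \<le> 1" unfolding pe using psum by (simp add: sums_iff)
qed

theorem theorem2:
  fixes lam_b P P0 \<alpha> C :: real and \<Psi> :: "nat \<Rightarrow> nat"
  assumes "0 < lam_b" and "0 < P" and "0 < P0" and "2 < \<alpha>" and "0 < C"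
    and "mono \<Psi>" and "\<And>n. 1 \<le> \<Psi> n"
  shows "\<forall>\<epsilon>>0. \<exists>K::real.
     (\<lambda>n. net_prob lam_b n (\<lambda>N x \<sigma>. worst_rate_le P P0 \<alpha> \<Psi> C n N x \<sigma>
            (K * real (\<Psi> n) powr (2 / \<alpha>) / real n powr (1/2 - \<epsilon>))))
     \<longlonglongrightarrow> 1"
proof (intro allI impI)
  fix \<epsilon> :: real assume \<epsilon>: "0 < \<epsilon>"
  note lam = assms(1) and PP = assms(2,3) and \<alpha>2 = assms(4) and C = assms(5) and psi = assms(7)
  have \<alpha>: "0 < \<alpha>" using \<alpha>2 by simp
  define c where "c = max 1 ((P / P0) powr (1/\<alpha>))"
  define K where "K = 2 * c * C"
  define lo where "lo n = 1 - 4 * real n powr (-\<epsilon>) - 4 / (lam_b * real n)" for n :: nat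
  let ?f = "\<lambda>n. net_prob lam_b n (\<lambda>N x \<sigma>. worst_rate_le P P0 \<alpha> \<Psi> C n N x \<sigma>
            (K * real (\<Psi> n) powr (2 / \<alpha>) / real n powr (1/2 - \<epsilon>)))"
  have bounds: "lo n \<le> ?f n \<and> ?f n \<le> 1" if n: "1 \<le> n" for n
  proof -
    define \<delta> where "\<delta> = real n powr (-\<epsilon>)"
    define D where "D = c * real (\<Psi> n) powr (2/\<alpha>)"
    define b where "b = K * real (\<Psi> n) powr (2 / \<alpha>) / real n powr (1/2 - \<epsilon>)"
    have \<delta>: "0 < \<delta>" using n unfolding \<delta>_def by simp
    have D: "0 \<le> D" unfolding D_def c_def by simp
    have hop: "\<And>d. hop_ok P P0 \<alpha> \<Psi> n d \<Longrightarrow> d \<le> D"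
      unfolding D_def c_def using hop_bound[where \<Psi>=\<Psi> and n=n, OF PP \<alpha> psi[of n]] by blast
    have "\<delta> * sqrt (real n) = real n powr (1/2 - \<epsilon>)"
      unfolding \<delta>_def by (simp add: powr_half_sqrt[symmetric] powr_add[symmetric])
    then have b: "2 * D * C / (\<delta> * sqrt (real n)) \<le> b"
      unfolding b_def D_def K_def by (simp add: algebra_simps)
    define q where "q N = (\<Sum>\<sigma>\<in>{\<sigma>. \<sigma> permutes {..<N}}. measure (PiM {..<N} (\<lambda>_. Um n))
        {x \<in> space (PiM {..<N} (\<lambda>_. Um n)). worst_rate_le P P0 \<alpha> \<Psi> C n N x \<sigma> b}) / fact N" for N
    have feq: "?f n = (\<Sum>N. pmf (poisson_pmf (lam_b * real n)) N * q N)"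
      unfolding net_prob_def q_def b_def Um_def by simp
    have pU: "prob_space (Um n)" using prob_Um[OF n] .
    have q01: "0 \<le> q N \<and> q N \<le> 1" for N
    proof -
      interpret M: prob_space "PiM {..<N} (\<lambda>_. Um n)" using pU by (intro prob_space_PiM) auto
      have card: "card {\<sigma>. \<sigma> permutes {..<N}} = fact N" by (rule card_permutations) auto
      have s0: "0 \<le> (\<Sum>\<sigma>\<in>{\<sigma>. \<sigma> permutes {..<N}}. measure (PiM {..<N} (\<lambda>_. Um n))
        {x \<in> space (PiM {..<N} (\<lambda>_. Um n)). worst_rate_le P P0 \<alpha> \<Psi> C n N x \<sigma> b})"
        by (intro sum_nonneg) auto
      have "(\<Sum>\<sigma>\<in>{\<sigma>. \<sigma> permutes {..<N}}. measure (PiM {..<N} (\<lambda>_. Um n))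
        {x \<in> space (PiM {..<N} (\<lambda>_. Um n)). worst_rate_le P P0 \<alpha> \<Psi> C n N x \<sigma> b})
        \<le> (\<Sum>\<sigma>\<in>{\<sigma>. \<sigma> permutes {..<N}}. 1)"
        by (intro sum_mono M.prob_le_1)
      also have "\<dots> = fact N" using card by simp
      finally show ?thesis using s0 unfolding q_def by (simp add: divide_le_eq_1)
    qed
    have qlow: "1 - 4 * \<delta> - 4 / (real N + 1) \<le> q N" for N
    proof (cases "N = 0")
      case True
      then show ?thesis using q01[of N] \<delta> by simp
    next
      case False
      then have N: "1 \<le> N" by simp
      have "1 - 4 * \<delta> - 2 / real N \<le> q N"
        unfolding q_def by (rule avg_bound[OF n N \<delta> hop D C b])
      moreover have "2 / real N \<le> 4 / (real N + 1)" using N by (simp add: field_simps)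
      ultimately show ?thesis by simp
    qed
    have \<mu>: "0 < lam_b * real n" using lam n by simp
    show ?thesis
      using poisson_series[OF \<mu> q01 qlow] feq unfolding lo_def \<delta>_def by simp
  qed
  have l1: "(\<lambda>n. real n powr (-\<epsilon>)) \<longlonglongrightarrow> 0"
    using \<epsilon> by (intro tendsto_neg_powr filterlim_real_sequentially) auto
  have "(\<lambda>n. 4 / lam_b * (1 / real n)) \<longlonglongrightarrow> 4 / lam_b * 0"
    by (intro tendsto_mult tendsto_const lim_inverse_n')
  then have l2: "(\<lambda>n. 4 / (lam_b * real n)) \<longlonglongrightarrow> 0" by simp
  have "lo \<longlonglongrightarrow> 1 - 4 * 0 - 0"
    unfolding lo_def by (intro tendsto_diff tendsto_mult tendsto_const l1 l2)
  then have lo1: "lo \<longlonglongrightarrow> 1" by simp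
  have "?f \<longlonglongrightarrow> 1"
  proof (rule tendsto_sandwich[OF _ _ lo1 tendsto_const])
    show "\<forall>\<^sub>F n in sequentially. lo n \<le> ?f n"
      using bounds by (auto simp: eventually_sequentially intro!: exI[of _ 1])
    show "\<forall>\<^sub>F n in sequentially. ?f n \<le> 1"
      using bounds by (auto simp: eventually_sequentially intro!: exI[of _ 1])
  qed
  then show "\<exists>K::real.
     (\<lambda>n. net_prob lam_b n (\<lambda>N x \<sigma>. worst_rate_le P P0 \<alpha> \<Psi> C n N x \<sigma>
            (K * real (\<Psi> n) powr (2 / \<alpha>) / real n powr (1/2 - \<epsilon>))))
     \<longlonglongrightarrow> 1" by blast
qed

end
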